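(* Let $A(0)=1$ and $A(n)=nA(n-1)+1$ for $n\ge1$ (so $A(n)=\sum_{r=0}^n n!/r!$). For every integer $M>0$, the sequence $(A(n)\bmod M)_{n\ge0}$ is periodic with period exactly $M$. *)

theory Defs
  imports Main
begin

fun A :: "nat \<Rightarrow> nat" where
  "A 0 = 1"
| "A (Suc n) = Suc n * A n + 1"

definition is_period :: "(nat \<Rightarrow> 'a) \<Rightarrow> nat \<Rightarrow> bool" where
  "is_period s p \<longleftrightarrow> p > 0 \<and> (\<forall>n. s (n + p) = s n)"

end

theory Submission
  imports Defs "HOL-Number_Theory.Cong"
begin

definition ff :: "int \<Rightarrow> nat \<Rightarrow> int" where
  "ff x k = (\<Prod>j<k. x - int j)"

definition PP :: "nat \<Rightarrow> int \<Rightarrow> int" where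
  "PP M x = (\<Sum>k<M. ff x k)"

lemma ff_Suc: "ff (x+1) (Suc k) = (x+1) * ff x k"
  unfolding ff_def by (subst prod.lessThan_Suc_shift) simp

lemma ff_zero: "ff 0 (Suc k) = 0"
  using ff_Suc[of "-1" k] by simp

lemma PP_zero: assumes "M > 0" shows "PP M 0 = 1"
proof -
  from assms obtain m where "M = Suc m" using gr0_implies_Suc by blast
  then show ?thesis unfolding PP_def
    by (simp only: sum.lessThan_Suc_shift ff_zero) (simp add: ff_def)
qed

lemma PP_rec: "(x+1) * PP M x + 1 = PP M (x+1) + ff (x+1) M"
proof -
  have "(x+1) * PP M x + 1 = (\<Sum>k<M. ff (x+1) (Suc k)) + ff (x+1) 0"
    unfolding PP_def by (simp add: sum_distrib_left ff_Suc del: ff_def) (simp add: ff_def)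
  also have "\<dots> = (\<Sum>k<Suc M. ff (x+1) k)"
    by (subst sum.lessThan_Suc_shift) simp
  also have "\<dots> = PP M (x+1) + ff (x+1) M"
    unfolding PP_def by simp
  finally show ?thesis .
qed

lemma ff_dvd: assumes "M > 0" shows "int M dvd ff x M"
proof -
  define j where "j = nat (x mod int M)"
  have "x mod int M \<ge> 0" "x mod int M < int M" using assms by simp_all
  then have jj: "int j = x mod int M" "j < M" unfolding j_def by simp_all
  have "int M dvd x - x mod int M" by (rule minus_mod_eq_mult_div[THEN ssubst]) simp
  then have d: "int M dvd x - int j" using jj by simp
  have "(\<Prod>j<M. x - int j) = (x - int j) * (\<Prod>i\<in>{..<M} - {j}. x - int i)"
    using prod.remove[of "{..<M}" j "\<lambda>j. x - int j"] jj by simp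
  then show ?thesis unfolding ff_def using d by (metis dvd_mult2)
qed

lemma A_cong: assumes "M > 0" shows "[int (A n) = PP M (int n)] (mod int M)"
proof (induction n)
  case 0
  then show ?case using PP_zero[OF assms] by simp
next
  case (Suc n)
  have "[int (A (Suc n)) = (int n + 1) * PP M (int n) + 1] (mod int M)"
    using Suc by (simp add: cong_add cong_mult algebra_simps)
  moreover have "[(int n + 1) * PP M (int n) + 1 = PP M (int n + 1)] (mod int M)"
    unfolding PP_rec using ff_dvd[OF assms]
    by (metis add_0_right cong_add_lcancel_0 cong_dvd_iff cong_refl cong_0_iff cong_add)
  ultimately show ?case using cong_trans by (metis of_nat_Suc add.commute)
qed

lemma PP_per: "[PP M (x + int M) = PP M x] (mod int M)"
  unfolding PP_def ff_def
proof (intro cong_sum cong_prod)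
  fix k j
  show "[x + int M - int j = x - int j] (mod int M)"
    by (simp add: cong_iff_dvd_diff)
qed

theorem propositionA5:
  fixes M :: nat
  assumes "M > 0"
  shows "is_period (\<lambda>n. A n mod M) M \<and>
         (\<forall>p. is_period (\<lambda>n. A n mod M) p \<longrightarrow> M \<le> p)"
proof
  show "is_period (\<lambda>n. A n mod M) M"
    unfolding is_period_def
  proof (intro conjI allI)
    fix n
    have c1: "[int (A (n+M)) = PP M (int n + int M)] (mod int M)"
      using A_cong[OF assms, of "n+M"] by simp
    have c2: "[PP M (int n + int M) = PP M (int n)] (mod int M)" by (rule PP_per)
    have c3: "[PP M (int n) = int (A n)] (mod int M)"
      using A_cong[OF assms, of n] by (rule cong_sym)
    have "[int (A (n+M)) = int (A n)] (mod int M)"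
      using cong_trans[OF cong_trans[OF c1 c2] c3] .
    then have "[A (n+M) = A n] (mod M)" by (simp only: cong_int_iff)
    then show "A (n + M) mod M = A n mod M"
      unfolding cong_def .
  qed (rule assms)
next
  show "\<forall>p. is_period (\<lambda>n. A n mod M) p \<longrightarrow> M \<le> p"
  proof (intro allI impI)
    fix p assume h: "is_period (\<lambda>n. A n mod M) p"
    then have p0: "p > 0" and per: "\<And>n. A (n+p) mod M = A n mod M"
      unfolding is_period_def by auto
    have e1: "A (Suc p) mod M = 2 mod M" using per[of 1] by (simp add: numeral_2_eq_2)
    have e2: "A p mod M = 1 mod M" using per[of 0] by simp
    have "A (Suc p) mod M = (Suc p * (A p mod M) + 1) mod M"
      by (metis A.simps(2) mod_add_left_eq mod_mult_right_eq)
    also have "\<dots> = (Suc p + 1) mod M"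
      using e2 by (metis mod_add_left_eq mod_mult_right_eq mult.right_neutral)
    finally have "(p + 2) mod M = (0 + 2) mod M" using e1 by (simp add: numeral_2_eq_2)
    then have "[p = 0] (mod M)" unfolding cong_def[symmetric]
      using cong_add_rcancel_nat by blast
    then have "M dvd p" by (simp add: cong_0_iff)
    then show "M \<le> p" using p0 by (simp add: dvd_imp_le)
  qed
qed

end
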